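(* For every $\lambda\in\Lambda$ one has $W_\lambda=\bigcap_{i=0}^{r+1}\mathrm{Stab}(R_i^\lambda)$, where $\mathrm{Stab}(X)=\{g\in W\mid g(X)=X\}$ for $X\subseteq\mathbb{Z}$.
   Context: Fix integers $r\ge 0$, $d\ge 2$, set $D=2d+2$. Let $W$ be the group of bijections $g:\mathbb{Z}\to\mathbb{Z}$ with $g(i+D)=g(i)+D$, $g(-i)=-g(i)$ for all $i$; it is a Coxeter group with simple reflections $s_0,\dots,s_d$ where ($W$-elements being determined by their values on $1,\dots,d$) $s_0(1)=-1$, $s_0(k)=k$ ($2\le k\le d$); $s_d(d)=d+2$, $s_d(k)=k$ ($k<d$); and $s_i$ ($1\le i\le d-1$) swaps $i,i+1$ and fixes the other $k\in[1..d]$. Let $\Lambda$ be the set of $\lambda=(\lambda_0,\dots,\lambda_{r+1})\in\mathbb{N}^{r+2}$ with $\sum\lambda_i=d$; put $\lambda_{0,i}=\lambda_0+\dots+\lambda_i$. $W_\lambda$ is the subgroup generated by $\{s_0,\dots,s_d\}\setminus\{s_{\lambda_{0,0}},s_{\lambda_{0,1}},\dots,s_{\lambda_{0,r}}\}$. Define integer intervals $R_0^\lambda=[-\lambda_0..\lambda_0]$, $R_i^\lambda=(\lambda_{0,i-1}..\lambda_{0,i}]$ for $1\le i\le r$, $R^\lambda_{r+1}=[d+1-\lambda_{r+1}..d+1+\lambda_{r+1}]$ (here $[a..b]$, $(a..b]$ denote integer intervals). *)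

theory Defs
  imports Main
begin

definition Dper :: "nat \<Rightarrow> int" where
  "Dper d = 2 * int d + 2"

text \<open>The affine Weyl group W (type C) as a set of bijections of the integers.\<close>
definition Wgrp :: "nat \<Rightarrow> (int \<Rightarrow> int) set" where
  "Wgrp d = {g. bij g \<and> (\<forall>i. g (i + Dper d) = g i + Dper d) \<and> (\<forall>i. g (- i) = - g i)}"

text \<open>Unique extension to Z (via g(i+D)=g(i)+D, g(-i)=-g(i)) of values prescribed on 1..d.\<close>
definition ext :: "nat \<Rightarrow> (int \<Rightarrow> int) \<Rightarrow> int \<Rightarrow> int" where
  "ext d f i = (let D = Dper d; m = i mod D; q = i div D in
     if m = 0 \<or> m = int d + 1 then i
     else if m \<le> int d then f m + q * D
     else (q + 1) * D - f (D - m))"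

definition sref :: "nat \<Rightarrow> nat \<Rightarrow> int \<Rightarrow> int" where
  "sref d j = ext d (\<lambda>k.
     if j = 0 then (if k = 1 then -1 else k)
     else if j = d then (if k = int d then int d + 2 else k)
     else (if k = int j then int j + 1 else if k = int j + 1 then int j else k))"

inductive_set gen_group :: "(int \<Rightarrow> int) set \<Rightarrow> (int \<Rightarrow> int) set" for S where
  gen_id: "id \<in> gen_group S"
| gen_mult: "s \<in> S \<Longrightarrow> g \<in> gen_group S \<Longrightarrow> s \<circ> g \<in> gen_group S"
| gen_inv: "s \<in> S \<Longrightarrow> g \<in> gen_group S \<Longrightarrow> inv s \<circ> g \<in> gen_group S"

definition lsum :: "(nat \<Rightarrow> nat) \<Rightarrow> nat \<Rightarrow> nat" where
  "lsum lam i = (\<Sum>k\<le>i. lam k)"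

text \<open>Lambda: lam_0,...,lam_{r+1} natural numbers summing to d (values beyond r+1 irrelevant).\<close>
definition in_Lambda :: "nat \<Rightarrow> nat \<Rightarrow> (nat \<Rightarrow> nat) \<Rightarrow> bool" where
  "in_Lambda d r lam \<longleftrightarrow> (\<Sum>k\<le>r+1. lam k) = d"

definition Wlam :: "nat \<Rightarrow> nat \<Rightarrow> (nat \<Rightarrow> nat) \<Rightarrow> (int \<Rightarrow> int) set" where
  "Wlam d r lam = gen_group {sref d j | j. j \<le> d \<and> j \<notin> {lsum lam i | i. i \<le> r}}"

definition Rset :: "nat \<Rightarrow> nat \<Rightarrow> (nat \<Rightarrow> nat) \<Rightarrow> nat \<Rightarrow> int set" where
  "Rset d r lam i =
     (if i = 0 then {- int (lam 0) .. int (lam 0)}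
      else if i \<le> r then {int (lsum lam (i - 1)) <.. int (lsum lam i)}
      else {int d + 1 - int (lam (r + 1)) .. int d + 1 + int (lam (r + 1))})"

definition Stab :: "nat \<Rightarrow> int set \<Rightarrow> (int \<Rightarrow> int) set" where
  "Stab d X = {g \<in> Wgrp d. g ` X = X}"

end

theory Submission
  imports Defs
begin


definition Pd :: "nat \<Rightarrow> (int \<Rightarrow> int) \<Rightarrow> bool" where
  "Pd d g \<longleftrightarrow> (\<forall>i. g (i + Dper d) = g i + Dper d) \<and> (\<forall>i. g (- i) = - g i)"

lemma Pd_odd: "Pd d g \<Longrightarrow> g (- i) = - g i"
  by (simp add: Pd_def)

lemma Pd_per: "Pd d g \<Longrightarrow> g (i + Dper d) = g i + Dper d"
  by (simp add: Pd_def)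

lemma Pd_zero: "Pd d g \<Longrightarrow> g 0 = 0"
  using Pd_odd[of d g 0] by simp

lemma Pd_refl: "Pd d g \<Longrightarrow> g (Dper d - x) = Dper d - g x"
  using Pd_odd[of d g x] Pd_per[of d g "-x"] by simp

lemma Pd_mid: "Pd d g \<Longrightarrow> g (int d + 1) = int d + 1"
  using Pd_refl[of d g "int d + 1"] by (simp add: Dper_def)

lemma Pd_perq: "Pd d g \<Longrightarrow> g (i + q * Dper d) = g i + q * Dper d"
proof (induction q rule: int_induct[where k=0])
  case base then show ?case by simp
next
  case (step1 q)
  have "g (i + (q+1) * Dper d) = g ((i + q * Dper d) + Dper d)" by (simp add: algebra_simps)
  also have "\<dots> = g (i + q * Dper d) + Dper d" using Pd_per[OF step1(3)] .
  finally show ?case using step1 by (simp add: algebra_simps)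
next
  case (step2 q)
  have "g (i + q * Dper d) = g ((i + (q - 1) * Dper d) + Dper d)" by (simp add: algebra_simps)
  also have "\<dots> = g (i + (q - 1) * Dper d) + Dper d" using Pd_per[OF step2(3)] .
  finally show ?case using step2 by (simp add: algebra_simps)
qed

lemma Pd_det:
  assumes "Pd d g" "Pd d h" "\<forall>k\<in>{1..int d}. g k = h k"
  shows "g = h"
proof
  fix i
  define D where "D = Dper d"
  have Dp: "D > 0" by (simp add: D_def Dper_def)
  define m where "m = i mod D"
  define q where "q = i div D"
  have i: "i = m + q * D" by (simp add: m_def q_def)
  have m: "0 \<le> m" "m < D" using Dp by (auto simp: m_def)
  have gm: "g m = h m"
  proof -
    have "m = 0 \<or> m \<in> {1..int d} \<or> m = int d + 1 \<or> D - m \<in> {1..int d}"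
      using m by (auto simp: D_def Dper_def)
    then consider "m = 0" | "m \<in> {1..int d}" | "m = int d + 1" | "D - m \<in> {1..int d}"
      by blast
    then show ?thesis
    proof cases
      case 1 then show ?thesis using Pd_zero[OF assms(1)] Pd_zero[OF assms(2)] by simp
    next
      case 2 then show ?thesis using assms(3) by simp
    next
      case 3 then show ?thesis using Pd_mid[OF assms(1)] Pd_mid[OF assms(2)] by simp
    next
      case 4
      have "g m = g (D - (D - m))" by simp
      also have "\<dots> = D - g (D - m)" using Pd_refl[OF assms(1)] D_def by simp
      also have "\<dots> = D - h (D - m)" using assms(3) 4 by simp
      also have "\<dots> = h (D - (D - m))" using Pd_refl[OF assms(2)] D_def by simp
      finally show ?thesis by simp
    qed
  qed
  show "g i = h i" unfolding i D_def
    using Pd_perq[OF assms(1)] Pd_perq[OF assms(2)] gm by simp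
qed

lemma Pd_comp: "Pd d g \<Longrightarrow> Pd d h \<Longrightarrow> Pd d (g \<circ> h)"
  by (simp add: Pd_def)

lemma Pd_id: "Pd d id"
  by (simp add: Pd_def)

lemma ext_Pd: "Pd d (ext d f)"
proof -
  define D where "D = Dper d"
  have Dp: "D > 0" by (simp add: D_def Dper_def)
  have per: "ext d f (i + D) = ext d f i + D" for i
  proof -
    have "(i + D) mod D = i mod D" "(i + D) div D = i div D + 1" using Dp by (auto simp: div_add_self2)
    then show ?thesis unfolding ext_def Let_def D_def[symmetric] by (auto simp: algebra_simps)
  qed
  have odd: "ext d f (- i) = - ext d f i" for i
  proof -
    define m where "m = i mod D"
    define q where "q = i div D"
    have i: "i = m + q * D" by (simp add: m_def q_def)
    have m: "0 \<le> m" "m < D" using Dp by (auto simp: m_def)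
    show ?thesis
    proof (cases "m = 0")
      case True
      then have "(-i) mod D = 0" by (simp add: m_def zmod_zminus1_eq_if)
      then show ?thesis using True unfolding ext_def Let_def D_def[symmetric] m_def by simp
    next
      case False
      have mm: "(-i) mod D = D - m" using False by (simp add: m_def zmod_zminus1_eq_if)
      have qq: "(-i) div D = - q - 1" using False Dp by (simp add: m_def q_def zdiv_zminus1_eq_if)
      have ei: "ext d f i = (if m = int d + 1 then i else if m \<le> int d then f m + q * D else (q + 1) * D - f (D - m))"
        using False unfolding ext_def Let_def D_def[symmetric] m_def q_def by simp
      have emi: "ext d f (-i) = (if D - m = int d + 1 then -i else if D - m \<le> int d then f (D - m) + (- q - 1) * D else (- q - 1 + 1) * D - f (D - (D - m)))"
        using False mm qq m unfolding ext_def Let_def D_def[symmetric] by simp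
      show ?thesis using ei emi m i by (auto simp: D_def Dper_def algebra_simps)
    qed
  qed
  show ?thesis using per odd by (simp add: Pd_def D_def)
qed

lemma ext_on: "k \<in> {1..int d} \<Longrightarrow> ext d f k = f k"
proof -
  assume k: "k \<in> {1..int d}"
  have "k mod Dper d = k" "k div Dper d = 0" using k by (auto simp: Dper_def)
  then show ?thesis using k unfolding ext_def Let_def by auto
qed

lemma W_iff: "g \<in> Wgrp d \<longleftrightarrow> bij g \<and> Pd d g"
  by (simp add: Wgrp_def Pd_def)

lemma sref_val: "k \<in> {1..int d} \<Longrightarrow> sref d j k =
  (if j = 0 then (if k = 1 then -1 else k)
   else if j = d then (if k = int d then int d + 2 else k)
   else (if k = int j then int j + 1 else if k = int j + 1 then int j else k))"
  unfolding sref_def by (simp add: ext_on)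

lemma sref_Pd: "Pd d (sref d j)"
  unfolding sref_def by (rule ext_Pd)

lemma sref_invol:
  assumes "d \<ge> 2" "j \<le> d"
  shows "sref d j \<circ> sref d j = id"
proof (rule Pd_det[OF Pd_comp[OF sref_Pd sref_Pd] Pd_id], intro ballI)
  fix k assume k: "k \<in> {1..int d}"
  let ?s = "sref d j"
  have P: "Pd d ?s" by (rule sref_Pd)
  show "(?s \<circ> ?s) k = id k"
  proof (cases "j = 0")
    case True
    show ?thesis
    proof (cases "k = 1")
      case True
      have "?s (-1) = - ?s 1" using Pd_odd[OF P, of 1] by simp
      also have "?s 1 = -1" using sref_val[of 1 d j] \<open>j = 0\<close> assms by simp
      finally show ?thesis using True sref_val[of 1 d j] \<open>j = 0\<close> assms by simp
    next
      case False then show ?thesis using sref_val[OF k] \<open>j = 0\<close> by simp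
    qed
  next
    case j0: False
    show ?thesis
    proof (cases "j = d")
      case True
      show ?thesis
      proof (cases "k = int d")
        case True
        have "?s (int d + 2) = ?s (Dper d - int d)" by (simp add: Dper_def)
        also have "\<dots> = Dper d - ?s (int d)" by (rule Pd_refl[OF P])
        also have "?s (int d) = int d + 2" using sref_val[of "int d" d j] \<open>j = d\<close> j0 assms by simp
        finally show ?thesis using True sref_val[of "int d" d j] \<open>j = d\<close> j0 assms by (simp add: Dper_def)
      next
        case False then show ?thesis using sref_val[OF k] \<open>j = d\<close> j0 by simp
      qed
    next
      case jd: False
      have j1: "int j + 1 \<in> {1..int d}" "int j \<in> {1..int d}" using j0 jd assms by auto
      show ?thesis using sref_val[OF k] sref_val[OF j1(1)] sref_val[OF j1(2)] j0 jd by auto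
    qed
  qed
qed

lemma invol_bij: "s \<circ> s = id \<Longrightarrow> bij s"
  using o_bij by blast

lemma sref_W: "d \<ge> 2 \<Longrightarrow> j \<le> d \<Longrightarrow> sref d j \<in> Wgrp d"
  using W_iff sref_Pd sref_invol invol_bij by blast

lemma W_comp: "g \<in> Wgrp d \<Longrightarrow> h \<in> Wgrp d \<Longrightarrow> g \<circ> h \<in> Wgrp d"
  using W_iff Pd_comp bij_comp by metis

lemma Stab_comp: "g \<in> Stab d X \<Longrightarrow> h \<in> Stab d X \<Longrightarrow> g \<circ> h \<in> Stab d X"
proof -
  assume a: "g \<in> Stab d X" "h \<in> Stab d X"
  have "(g \<circ> h) ` X = g ` (h ` X)" by (rule image_comp[symmetric])
  then show ?thesis using a W_comp unfolding Stab_def by auto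
qed

lemma Stab_id: "id \<in> Stab d X"
  unfolding Stab_def W_iff using Pd_id by auto

lemma Stab_invol:
  assumes "s \<in> Wgrp d" "s \<circ> s = id" "\<forall>x\<in>X. s x \<in> X"
  shows "s \<in> Stab d X"
proof -
  have "s ` X \<subseteq> X" using assms(3) by auto
  moreover have "X \<subseteq> s ` X"
  proof
    fix x assume "x \<in> X"
    then have "s (s x) = x" "s x \<in> X" using assms(2,3) pointfree_idE by auto
    then show "x \<in> s ` X" by force
  qed
  ultimately show ?thesis using assms(1) by (auto simp: Stab_def)
qed

lemma gen_right: "h \<in> gen_group S \<Longrightarrow> s \<in> S \<Longrightarrow> h \<circ> s \<in> gen_group S"
proof (induction h rule: gen_group.induct)
  case gen_id
  then show ?case using gen_group.gen_mult[OF gen_id gen_group.gen_id] by simp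
next
  case (gen_mult s' g)
  have "s' \<circ> (g \<circ> s) \<in> gen_group S" using gen_mult gen_group.gen_mult[of s' S "g \<circ> s"] by blast
  then show ?case by (simp add: comp_def)
next
  case (gen_inv s' g)
  have "inv s' \<circ> (g \<circ> s) \<in> gen_group S" using gen_inv gen_group.gen_inv[of s' S "g \<circ> s"] by blast
  then show ?case by (simp add: comp_def)
qed


lemma lsum_mono: "i \<le> i' \<Longrightarrow> lsum lam i \<le> lsum lam i'"
  unfolding lsum_def by (rule sum_mono2) auto

lemma lsum_0: "lsum lam 0 = lam 0"
  by (simp add: lsum_def)

lemma lsum_Suc: "lsum lam (Suc i) = lsum lam i + lam (Suc i)"
  by (simp add: lsum_def)

lemma lsum_last: "in_Lambda d r lam \<Longrightarrow> lsum lam r + lam (r+1) = d"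
  by (simp add: in_Lambda_def lsum_def)

lemma lsum_le: "in_Lambda d r lam \<Longrightarrow> i \<le> r \<Longrightarrow> lsum lam i \<le> d"
  using lsum_mono[of i r lam] lsum_last[of d r lam] by simp

lemma sref_cases:
  assumes "x \<in> {1..int d}"
  shows "(sref d j x = x \<and> \<not>(j = 0 \<and> x = 1) \<and> \<not>(j = d \<and> x = int d) \<and> \<not>(0 < j \<and> j < d \<and> (x = int j \<or> x = int j + 1)))
    \<or> (j = 0 \<and> x = 1 \<and> sref d j x = -1)
    \<or> (j = d \<and> 0 < j \<and> x = int d \<and> sref d j x = int d + 2)
    \<or> (0 < j \<and> j < d \<and> x = int j \<and> sref d j x = int j + 1)
    \<or> (0 < j \<and> j < d \<and> x = int j + 1 \<and> sref d j x = int j)"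
  using sref_val[OF assms, of j] assms by (cases "j = 0"; cases "j = d"; cases "j < d"; auto)

lemma sym0:
  assumes "Pd d g" "\<forall>x\<in>{1..a}. g x \<in> {-a..a}" "x \<in> {-a..a}"
  shows "g x \<in> {-a..a}"
proof -
  consider "x = 0" | "x \<in> {1..a}" | "-x \<in> {1..a}" using assms(3) by fastforce
  then show ?thesis
  proof cases
    case 1 then show ?thesis using Pd_zero[OF assms(1)] assms(3) by auto
  next
    case 2 then show ?thesis using assms(2) by auto
  next
    case 3
    have "g x = - g (-x)" using Pd_odd[OF assms(1), of "-x"] by simp
    then show ?thesis using assms(2) 3 by fastforce
  qed
qed

lemma symlast:
  assumes "Pd d g" "\<forall>x\<in>{int d+1-c..int d}. g x \<in> {int d+1-c..int d+1+c}"
    "x \<in> {int d+1-c..int d+1+c}"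
  shows "g x \<in> {int d+1-c..int d+1+c}"
proof -
  consider "x = int d + 1" | "x \<in> {int d+1-c..int d}" | "Dper d - x \<in> {int d+1-c..int d}"
    using assms(3) by (fastforce simp: Dper_def)
  then show ?thesis
  proof cases
    case 1 then show ?thesis using Pd_mid[OF assms(1)] assms(3) by auto
  next
    case 2 then show ?thesis using assms(2) by auto
  next
    case 3
    have "g x = Dper d - g (Dper d - x)" using Pd_refl[OF assms(1), of "Dper d - x"] by simp
    then show ?thesis using assms(2) 3 by (fastforce simp: Dper_def)
  qed
qed

lemma stab0_aux:
  fixes j d l0 lr lr1 :: nat and x :: int
  assumes x: "x \<in> {1..int l0}" and x': "x \<in> {1..int d}"
   and jl0: "j \<noteq> l0" and l0r: "l0 \<le> lr" and lr: "lr + lr1 = d"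
  shows "sref d j x \<in> {- int l0..int l0}"
  using sref_cases[OF x', of j] x jl0 l0r lr
  by (elim disjE conjE) simp_all

lemma gen_stab:
  assumes d2: "d \<ge> 2" and L: "in_Lambda d r lam" and j: "j \<le> d" "j \<notin> {lsum lam i | i. i \<le> r}"
    and i: "i \<le> r + 1"
  shows "sref d j \<in> Stab d (Rset d r lam i)"
proof (rule Stab_invol[OF sref_W[OF d2 j(1)] sref_invol[OF d2 j(1)]])
  let ?s = "sref d j"
  have P: "Pd d ?s" by (rule sref_Pd)
  have jall: "\<And>i'. i' \<le> r \<Longrightarrow> j \<noteq> lsum lam i'" using j(2) by blast
  have jl0: "j \<noteq> lam 0" using jall[of 0] lsum_0[of lam] by simp
  have jlr: "j \<noteq> lsum lam r" using jall[of r] by simp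
  have lr: "lsum lam r + lam (r+1) = d" by (rule lsum_last[OF L])
  have l0r: "lam 0 \<le> lsum lam r" using lsum_mono[of 0 r lam] lsum_0[of lam] by simp
  show "\<forall>x\<in>Rset d r lam i. ?s x \<in> Rset d r lam i"
  proof (cases "i = 0")
    case True
    have "\<forall>x\<in>{1..int (lam 0)}. ?s x \<in> {- int (lam 0)..int (lam 0)}"
    proof
      fix x assume x: "x \<in> {1..int (lam 0)}"
      then have x': "x \<in> {1..int d}" using l0r lr by auto
      show "?s x \<in> {- int (lam 0)..int (lam 0)}"
        by (rule stab0_aux[OF x x' jl0 l0r lr])
    qed
    then have "\<forall>x\<in>{- int (lam 0)..int (lam 0)}. ?s x \<in> {- int (lam 0)..int (lam 0)}"
      using sym0[OF P] by blast
    moreover have "Rset d r lam i = {- int (lam 0)..int (lam 0)}" using True by (simp add: Rset_def)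
    ultimately show ?thesis by simp
  next
    case i0: False
    show ?thesis
    proof (cases "i \<le> r")
      case True
      have a: "lsum lam (i - 1) \<le> lsum lam i" by (rule lsum_mono) simp
      have b: "lsum lam i \<le> d" using lsum_le[OF L True] .
      have c: "lam 0 \<le> lsum lam (i - 1)" using lsum_mono[of 0 "i - 1" lam] lsum_0[of lam] by simp
      have ji: "j \<noteq> lsum lam i" "j \<noteq> lsum lam (i - 1)" using jall True by auto
      have R: "Rset d r lam i = {int (lsum lam (i - 1))<..int (lsum lam i)}"
        using i0 True by (simp add: Rset_def)
      show ?thesis unfolding R
      proof
        fix x assume x: "x \<in> {int (lsum lam (i - 1))<..int (lsum lam i)}"
        then have x': "x \<in> {1..int d}" using b by auto
        show "?s x \<in> {int (lsum lam (i - 1))<..int (lsum lam i)}"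
          using sref_cases[OF x', of j] x jl0 ji a b c by (elim disjE conjE) simp_all
      qed
    next
      case False
      then have R: "Rset d r lam i = {int d + 1 - int (lam (r+1)) .. int d + 1 + int (lam (r+1))}"
        using i0 by (simp add: Rset_def)
      have "\<forall>x\<in>{int d+1-int (lam (r+1))..int d}. ?s x \<in> {int d + 1 - int (lam (r+1)) .. int d + 1 + int (lam (r+1))}"
      proof
        fix x assume x: "x \<in> {int d+1-int (lam (r+1))..int d}"
        then have x': "x \<in> {1..int d}" using lr by auto
        show "?s x \<in> {int d + 1 - int (lam (r+1)) .. int d + 1 + int (lam (r+1))}"
          using sref_cases[OF x', of j] x jl0 jlr l0r lr by (elim disjE conjE) simp_all
      qed
      then have "\<forall>x\<in>{int d + 1 - int (lam (r+1)) .. int d + 1 + int (lam (r+1))}. ?s x \<in> {int d + 1 - int (lam (r+1)) .. int d + 1 + int (lam (r+1))}"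
        using symlast[OF P] by blast
      then show ?thesis unfolding R by blast
    qed
  qed
qed



lemma cover_mid:
  assumes "k > int (lam 0)"
  shows "n \<le> r \<Longrightarrow> k \<le> int (lsum lam n) \<Longrightarrow> \<exists>i\<in>{1..n}. k \<in> {int (lsum lam (i - 1))<..int (lsum lam i)}"
proof (induction n)
  case 0 then show ?case using assms lsum_0[of lam] by simp
next
  case (Suc n)
  show ?case
  proof (cases "k \<le> int (lsum lam n)")
    case True then show ?thesis using Suc by force
  next
    case False then show ?thesis using Suc.prems by (intro bexI[of _ "Suc n"]) auto
  qed
qed

lemma cover:
  assumes L: "in_Lambda d r lam" and k: "k \<in> {1..int d}"
  shows "\<exists>i\<in>{0..r+1}. k \<in> Rset d r lam i"
proof -
  have lr: "lsum lam r + lam (r+1) = d" by (rule lsum_last[OF L])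
  show ?thesis
  proof (cases "k \<le> int (lam 0)")
    case True then show ?thesis using k by (intro bexI[of _ 0]) (auto simp: Rset_def)
  next
    case k0: False
    show ?thesis
    proof (cases "k \<le> int (lsum lam r)")
      case True
      then obtain i where i: "i \<in> {1..r}" "k \<in> {int (lsum lam (i - 1))<..int (lsum lam i)}"
        using cover_mid[of lam k r r] k0 by auto
      then show ?thesis by (intro bexI[of _ i]) (auto simp: Rset_def)
    next
      case False
      then show ?thesis using k lr by (intro bexI[of _ "r+1"]) (auto simp: Rset_def)
    qed
  qed
qed

lemma Rset_bound:
  assumes L: "in_Lambda d r lam" and i: "i \<le> r + 1"
  shows "Rset d r lam i \<subseteq> {- int d..2 * int d + 1}"
proof -
  have lr: "lsum lam r + lam (r+1) = d" by (rule lsum_last[OF L])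
  have l0r: "lam 0 \<le> lsum lam r" using lsum_mono[of 0 r lam] lsum_0[of lam] by simp
  show ?thesis
  proof (cases "i = 0")
    case True then show ?thesis using l0r lr by (auto simp: Rset_def)
  next
    case False
    show ?thesis
    proof (cases "i \<le> r")
      case True
      have "lsum lam i \<le> d" by (rule lsum_le[OF L True])
      then show ?thesis using False True by (auto simp: Rset_def)
    next
      case F2: False
      then show ?thesis using False lr by (auto simp: Rset_def)
    qed
  qed
qed

definition Gset :: "nat \<Rightarrow> nat \<Rightarrow> (nat \<Rightarrow> nat) \<Rightarrow> (int \<Rightarrow> int) set" where
  "Gset d r lam = (\<Inter>i\<in>{0..r+1}. Stab d (Rset d r lam i))"

lemma Gset_D: "g \<in> Gset d r lam \<Longrightarrow> i \<le> r + 1 \<Longrightarrow> g ` Rset d r lam i = Rset d r lam i"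
  unfolding Gset_def Stab_def by auto

lemma Gset_W: "g \<in> Gset d r lam \<Longrightarrow> g \<in> Wgrp d"
  unfolding Gset_def Stab_def by auto

lemma Gset_in: "g \<in> Gset d r lam \<Longrightarrow> i \<le> r + 1 \<Longrightarrow> x \<in> Rset d r lam i \<Longrightarrow> g x \<in> Rset d r lam i"
  using Gset_D by blast

lemma G_bound:
  assumes L: "in_Lambda d r lam" and g: "g \<in> Gset d r lam" and k: "k \<in> {1..int d}"
  shows "g k \<in> {- int d..2 * int d + 1}"
proof -
  obtain i where i: "i \<in> {0..r+1}" "k \<in> Rset d r lam i" using cover[OF L k] by blast
  then have "g k \<in> Rset d r lam i" using Gset_in[OF g] by auto
  moreover have "Rset d r lam i \<subseteq> {- int d..2 * int d + 1}" using Rset_bound[OF L] i by auto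
  ultimately show ?thesis by blast
qed

definition wt :: "nat \<Rightarrow> nat \<Rightarrow> int \<Rightarrow> int" where
  "wt d L k = (if k \<le> int L then k else k - (int d + 1))"

definition Phi :: "nat \<Rightarrow> nat \<Rightarrow> (int \<Rightarrow> int) \<Rightarrow> int" where
  "Phi d L g = (\<Sum>k\<in>{1..int d}. wt d L k * g k)"

lemma Phi_bound:
  assumes L: "in_Lambda d r lam" and g: "g \<in> Gset d r lam" and Ld: "Lr \<le> d"
  shows "Phi d Lr g \<le> int d * (int d * (2 * int d + 1))"
proof -
  have "Phi d Lr g \<le> (\<Sum>k\<in>{1..int d}. int d * (2 * int d + 1))"
    unfolding Phi_def
  proof (rule sum_mono)
    fix k assume k: "k \<in> {1..int d}"
    have a: "\<bar>wt d Lr k\<bar> \<le> int d" using k Ld by (auto simp: wt_def)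
    have b: "\<bar>g k\<bar> \<le> 2 * int d + 1" using G_bound[OF L g k] by auto
    have "wt d Lr k * g k \<le> \<bar>wt d Lr k * g k\<bar>" by simp
    also have "\<dots> = \<bar>wt d Lr k\<bar> * \<bar>g k\<bar>" by (simp add: abs_mult)
    also have "\<dots> \<le> int d * (2 * int d + 1)" using a b by (intro mult_mono) auto
    finally show "wt d Lr k * g k \<le> int d * (2 * int d + 1)" .
  qed
  also have "\<dots> = int d * (int d * (2 * int d + 1))" by simp
  finally show ?thesis .
qed

lemma inc_aux:
  fixes f :: "int \<Rightarrow> int"
  assumes inc: "\<forall>m. lo \<le> m \<longrightarrow> m < hi \<longrightarrow> f m < f (m + 1)" and a: "lo \<le> a"
  shows "a \<le> b \<Longrightarrow> b \<le> hi \<Longrightarrow> f b - f a \<ge> b - a"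
proof (induction b rule: int_ge_induct)
  case base then show ?case by simp
next
  case (step b)
  then have "f b < f (b + 1)" using inc a by auto
  then show ?case using step by simp
qed

lemma block_id:
  fixes f :: "int \<Rightarrow> int"
  assumes inc: "\<forall>m. lo \<le> m \<longrightarrow> m < hi \<longrightarrow> f m < f (m + 1)"
    and "f lo \<ge> lo" "f hi \<le> hi" "lo \<le> k" "k \<le> hi"
  shows "f k = k"
  using inc_aux[OF inc, of lo k] inc_aux[OF inc, of k hi] assms by auto

lemma sum_delta:
  fixes w h g :: "int \<Rightarrow> int"
  assumes "finite A" "T \<subseteq> A" "\<forall>k\<in>A - T. h k = g k"
  shows "(\<Sum>k\<in>A. w k * h k) - (\<Sum>k\<in>A. w k * g k) = (\<Sum>k\<in>T. w k * (h k - g k))"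
proof -
  have "(\<Sum>k\<in>A. w k * h k) - (\<Sum>k\<in>A. w k * g k) = (\<Sum>k\<in>A. w k * (h k - g k))"
    by (simp add: sum_subtractf[symmetric] right_diff_distrib)
  also have "\<dots> = (\<Sum>k\<in>T. w k * (h k - g k))"
    using assms by (intro sum.mono_neutral_right) auto
  finally show ?thesis .
qed



lemma no_improve_id:
  assumes d2: "d \<ge> 2" and L: "in_Lambda d r lam" and g: "g \<in> Gset d r lam"
   and noimp: "\<forall>j. j \<le> d \<and> j \<notin> {lsum lam i | i. i \<le> r} \<longrightarrow>
      Phi d (lsum lam r) (g \<circ> sref d j) \<le> Phi d (lsum lam r) g"
  shows "\<forall>k\<in>{1..int d}. g k = k"
proof -
  define Lr where "Lr = lsum lam r"
  define w where "w = wt d Lr"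
  have gW: "g \<in> Wgrp d" by (rule Gset_W[OF g])
  then have Pg: "Pd d g" and ig: "inj g" using W_iff bij_is_inj by auto
  have lr: "Lr + lam (r+1) = d" unfolding Lr_def by (rule lsum_last[OF L])
  have l0r: "lam 0 \<le> Lr" unfolding Lr_def using lsum_mono[of 0 r lam] lsum_0[of lam] by simp
  have lsr: "\<And>i. i \<le> r \<Longrightarrow> lsum lam i \<le> Lr" unfolding Lr_def by (rule lsum_mono)
  have ls0: "\<And>i. lam 0 \<le> lsum lam i" using lsum_mono[of 0 _ lam] lsum_0[of lam] by simp
  have fin: "finite {1..int d}" by simp
  have noimp': "\<And>j. j \<le> d \<Longrightarrow> (\<And>i. i \<le> r \<Longrightarrow> j \<noteq> lsum lam i) \<Longrightarrow>
      Phi d Lr (g \<circ> sref d j) - Phi d Lr g \<le> 0"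
    using noimp unfolding Lr_def by force
  have A: "g (int j) < g (int j + 1)" if j: "1 \<le> j" "j < d" "\<And>i. i \<le> r \<Longrightarrow> j \<noteq> lsum lam i" for j
  proof -
    let ?h = "g \<circ> sref d j"
    have jLr: "j \<noteq> Lr" using j(3)[of r] unfolding Lr_def by simp
    have hv: "\<forall>k\<in>{1..int d} - {int j, int j + 1}. ?h k = g k" using sref_val j by auto
    have T: "{int j, int j + 1} \<subseteq> {1..int d}" using j by auto
    have h1: "?h (int j) = g (int j + 1)" using sref_val[of "int j" d j] j by auto
    have h2: "?h (int j + 1) = g (int j)" using sref_val[of "int j + 1" d j] j by auto
    have "Phi d Lr ?h - Phi d Lr g = (\<Sum>k\<in>{int j, int j + 1}. w k * (?h k - g k))"
      unfolding Phi_def w_def by (rule sum_delta[OF fin T hv])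
    also have "\<dots> = w (int j) * (g (int j + 1) - g (int j)) + w (int j + 1) * (g (int j) - g (int j + 1))"
      using h1 h2 by simp
    also have "w (int j + 1) = w (int j) + 1" using jLr unfolding w_def wt_def by auto
    finally have "Phi d Lr ?h - Phi d Lr g = g (int j) - g (int j + 1)" by (simp add: algebra_simps comp_def)
    then have "g (int j) \<le> g (int j + 1)" using noimp'[of j] j by simp
    moreover have "g (int j) \<noteq> g (int j + 1)" using ig by (metis inj_eq add_cancel_left_right one_neq_zero)
    ultimately show ?thesis by simp
  qed
  have B: "g 1 \<ge> 1" if l0: "lam 0 \<noteq> 0"
  proof -
    let ?h = "g \<circ> sref d 0"
    have hv: "\<forall>k\<in>{1..int d} - {1}. ?h k = g k" using sref_val by auto
    have T: "{1} \<subseteq> {1..int d}" using d2 by auto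
    have h1: "?h 1 = - g 1" using sref_val[of 1 d 0] d2 Pd_odd[OF Pg, of 1] by auto
    have "Phi d Lr ?h - Phi d Lr g = (\<Sum>k\<in>{1}. w k * (?h k - g k))"
      unfolding Phi_def w_def by (rule sum_delta[OF fin T hv])
    also have "\<dots> = w 1 * (- g 1 - g 1)" using h1 by simp
    also have "w 1 = 1" using l0 l0r unfolding w_def wt_def by auto
    finally have "Phi d Lr ?h - Phi d Lr g = - 2 * g 1" by (simp add: comp_def)
    moreover have "0 \<noteq> lsum lam i" for i using ls0[of i] l0 by simp
    ultimately have "g 1 \<ge> 0" using noimp'[of 0] by simp
    moreover have "g 1 \<noteq> 0" using ig Pd_zero[OF Pg] by (metis inj_eq one_neq_zero)
    ultimately show ?thesis by simp
  qed
  have C: "g (int d) \<le> int d" if ld: "Lr \<noteq> d"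
  proof -
    let ?h = "g \<circ> sref d d"
    have hv: "\<forall>k\<in>{1..int d} - {int d}. ?h k = g k" using sref_val d2 by auto
    have T: "{int d} \<subseteq> {1..int d}" using d2 by auto
    have "sref d d (int d) = int d + 2" using sref_val[of "int d" d d] d2 by auto
    then have "?h (int d) = g (Dper d - int d)" by (simp add: Dper_def comp_def)
    then have h1: "?h (int d) = Dper d - g (int d)" using Pd_refl[OF Pg] by simp
    have "Phi d Lr ?h - Phi d Lr g = (\<Sum>k\<in>{int d}. w k * (?h k - g k))"
      unfolding Phi_def w_def by (rule sum_delta[OF fin T hv])
    also have "\<dots> = w (int d) * (Dper d - g (int d) - g (int d))" using h1 by simp
    also have "w (int d) = -1" using ld lr unfolding w_def wt_def by auto
    finally have "Phi d Lr ?h - Phi d Lr g = 2 * g (int d) - 2 * int d - 2" by (simp add: Dper_def comp_def)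
    moreover have "d \<noteq> lsum lam i" if "i \<le> r" for i using lsr[OF that] ld lr by simp
    ultimately have "g (int d) \<le> int d + 1" using noimp'[of d] by simp
    moreover have "g (int d) \<noteq> int d + 1" using ig Pd_mid[OF Pg] by (metis inj_eq add_cancel_left_right one_neq_zero)
    ultimately show ?thesis by simp
  qed
  show ?thesis
  proof
    fix k assume k: "k \<in> {1..int d}"
    obtain i where i: "i \<in> {0..r+1}" "k \<in> Rset d r lam i" using cover[OF L k] by blast
    show "g k = k"
    proof (cases "i = 0")
      case True
      have kk: "1 \<le> k" "k \<le> int (lam 0)" using i k True by (auto simp: Rset_def)
      have l0: "lam 0 \<noteq> 0" using kk by auto
      have top: "g (int (lam 0)) \<le> int (lam 0)"
        using Gset_in[OF g, of 0 "int (lam 0)"] by (auto simp: Rset_def)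
      have inc: "\<forall>m. 1 \<le> m \<longrightarrow> m < int (lam 0) \<longrightarrow> g m < g (m + 1)"
      proof (intro allI impI)
        fix m :: int assume m: "1 \<le> m" "m < int (lam 0)"
        have ok: "nat m \<noteq> lsum lam i" for i using ls0[of i] m by auto
        have "g (int (nat m)) < g (int (nat m) + 1)"
          using m l0r lr ok by (intro A) auto
        then show "g m < g (m + 1)" using m by simp
      qed
      show ?thesis using block_id[OF inc B[OF l0] top kk] .
    next
      case i0: False
      show ?thesis
      proof (cases "i \<le> r")
        case True
        let ?lo = "int (lsum lam (i - 1)) + 1" and ?hi = "int (lsum lam i)"
        have R: "Rset d r lam i = {?lo..?hi}" using i0 True by (auto simp: Rset_def)
        have kk: "?lo \<le> k" "k \<le> ?hi" using i R by auto
        have lo: "g ?lo \<ge> ?lo" using Gset_in[OF g, of i ?lo] True R kk by auto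
        have hi: "g ?hi \<le> ?hi" using Gset_in[OF g, of i ?hi] True R kk by auto
        have mono1: "lsum lam i' \<le> lsum lam (i - 1)" if "i' < i" for i'
          using lsum_mono[of i' "i - 1" lam] that by simp
        have mono2: "lsum lam i \<le> lsum lam i'" if "\<not> i' < i" for i'
          using lsum_mono[of i i' lam] that by simp
        have hid: "lsum lam i \<le> d" using lsum_le[OF L True] .
        have inc: "\<forall>m. ?lo \<le> m \<longrightarrow> m < ?hi \<longrightarrow> g m < g (m + 1)"
        proof (intro allI impI)
          fix m :: int assume m: "?lo \<le> m" "m < ?hi"
          have ok: "nat m \<noteq> lsum lam i'" for i'
            using mono1[of i'] mono2[of i'] m by (cases "i' < i") auto
          have "g (int (nat m)) < g (int (nat m) + 1)"
            using m hid ok by (intro A) auto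
          then show "g m < g (m + 1)" using m by simp
        qed
        show ?thesis using block_id[OF inc lo hi kk] .
      next
        case False
        then have ir: "i = r + 1" using i by auto
        have R: "Rset d r lam i = {int d + 1 - int (lam (r+1)) .. int d + 1 + int (lam (r+1))}"
          using ir by (simp add: Rset_def)
        have kk: "int Lr + 1 \<le> k" "k \<le> int d" using i R lr k by auto
        have ld: "Lr \<noteq> d" using kk by auto
        have lo: "g (int Lr + 1) \<ge> int Lr + 1" using Gset_in[OF g, of i "int Lr + 1"] ir R lr kk by auto
        have inc: "\<forall>m. int Lr + 1 \<le> m \<longrightarrow> m < int d \<longrightarrow> g m < g (m + 1)"
        proof (intro allI impI)
          fix m :: int assume m: "int Lr + 1 \<le> m" "m < int d"
          have ok: "nat m \<noteq> lsum lam i'" if "i' \<le> r" for i'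
            using lsr[OF that] m by auto
          have "g (int (nat m)) < g (int (nat m) + 1)"
            using m ok lr by (intro A) auto
          then show "g m < g (m + 1)" using m by simp
        qed
        show ?thesis using block_id[OF inc lo C[OF ld] kk] .
      qed
    qed
  qed
qed



lemma Gset_comp: "g \<in> Gset d r lam \<Longrightarrow> h \<in> Gset d r lam \<Longrightarrow> g \<circ> h \<in> Gset d r lam"
  unfolding Gset_def by (intro INT_I) (auto intro: Stab_comp)

lemma Gset_id: "id \<in> Gset d r lam"
  unfolding Gset_def by (intro INT_I) (rule Stab_id)

lemma gen_Gset:
  assumes d2: "d \<ge> 2" and L: "in_Lambda d r lam" and j: "j \<le> d" "j \<notin> {lsum lam i | i. i \<le> r}"
  shows "sref d j \<in> Gset d r lam"
  unfolding Gset_def using gen_stab[OF d2 L j] by auto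

theorem lemma2p2p1:
  fixes d r :: nat and lam :: "nat \<Rightarrow> nat"
  assumes "d \<ge> 2" and "in_Lambda d r lam"
  shows "Wlam d r lam = (\<Inter>i\<in>{0..r+1}. Stab d (Rset d r lam i))"
proof -
  note d2 = assms(1) and L = assms(2)
  define S where "S = {sref d j | j. j \<le> d \<and> j \<notin> {lsum lam i | i. i \<le> r}}"
  have W: "Wlam d r lam = gen_group S" unfolding Wlam_def S_def ..
  have SG: "s \<in> Gset d r lam" if "s \<in> S" for s
    using that gen_Gset[OF d2 L] unfolding S_def by blast
  have Sinv: "s \<circ> s = id" if "s \<in> S" for s
    using that sref_invol[OF d2] unfolding S_def by blast
  have sub: "h \<in> Gset d r lam" if "h \<in> gen_group S" for h
    using that
  proof (induction h rule: gen_group.induct)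
    case gen_id then show ?case by (rule Gset_id)
  next
    case (gen_mult s g) then show ?case using SG Gset_comp by blast
  next
    case (gen_inv s g)
    have "inv s = s" using Sinv[OF gen_inv(1)] by (intro inv_unique_comp)
    moreover have "s \<circ> g \<in> Gset d r lam" using Gset_comp[OF SG[OF gen_inv(1)] gen_inv(3)] .
    ultimately show ?case by (simp add: comp_def)
  qed
  define Lr where "Lr = lsum lam r"
  have Lrd: "Lr \<le> d" unfolding Lr_def by (rule lsum_le[OF L]) simp
  define B where "B = int d * (int d * (2 * int d + 1))"
  have sup: "g \<in> Gset d r lam \<longrightarrow> g \<in> gen_group S" for g
  proof (induction g rule: measure_induct_rule[where f = "\<lambda>g. nat (B - Phi d Lr g)"])
    case (less g)
    show ?case
    proof
      assume g: "g \<in> Gset d r lam"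
      have Pg: "Pd d g" using Gset_W[OF g] W_iff by blast
      show "g \<in> gen_group S"
      proof (cases "\<forall>k\<in>{1..int d}. g k = k")
        case True
        have "g = id" using Pd_det[OF Pg Pd_id] True by simp
        then show ?thesis using gen_group.gen_id by simp
      next
        case False
        have "\<not> (\<forall>j. j \<le> d \<and> j \<notin> {lsum lam i | i. i \<le> r} \<longrightarrow>
            Phi d (lsum lam r) (g \<circ> sref d j) \<le> Phi d (lsum lam r) g)"
          using no_improve_id[OF d2 L g] False by blast
        then obtain j where j: "j \<le> d" "j \<notin> {lsum lam i | i. i \<le> r}"
          and imp0: "\<not> Phi d Lr (g \<circ> sref d j) \<le> Phi d Lr g"
          unfolding Lr_def by blast
        have imp: "Phi d Lr (g \<circ> sref d j) > Phi d Lr g" using imp0 by simp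
        let ?s = "sref d j"
        have sS: "?s \<in> S" unfolding S_def using j by blast
        have gs: "g \<circ> ?s \<in> Gset d r lam" using Gset_comp[OF g SG[OF sS]] .
        have "Phi d Lr (g \<circ> ?s) \<le> B" unfolding B_def by (rule Phi_bound[OF L gs Lrd])
        then have "nat (B - Phi d Lr (g \<circ> ?s)) < nat (B - Phi d Lr g)" using imp by simp
        then have "g \<circ> ?s \<in> gen_group S" using less[of "g \<circ> ?s"] gs unfolding comp_def by simp
        then have "(g \<circ> ?s) \<circ> ?s \<in> gen_group S" using gen_right sS by simp
        moreover have "(g \<circ> ?s) \<circ> ?s = g" using Sinv[OF sS] by (simp add: comp_assoc)
        ultimately show ?thesis by simp
      qed
    qed
  qed
  have "gen_group S = Gset d r lam" using sub sup by auto
  then show ?thesis unfolding W Gset_def by simp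
qed


end
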